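(* Let $(X,Y)$ be a centred bivariate Gaussian vector with unit variances and correlation $\rho\in[0,1)$. Let $S\subset\mathbb{R}$ be a bounded open set with Lebesgue measure $|S|<\infty$. For $u>0$ define $d(u,S)=\inf_{s\in S}|u+s|=\operatorname{dist}(-u,S)$. Then \[ \mathbb{P}(X-u\in S,\ Y-u\in S)\le\frac{|S|^2}{2\pi\sqrt{1-\rho^2}}\exp\Big(-\frac{d(u,S)^2}{1+\rho}\Big). \] *)

theory Defs
  imports "HOL-Probability.Probability"
begin

definition bvn_density :: "real \<Rightarrow> real \<Rightarrow> real \<Rightarrow> real" where
  "bvn_density \<rho> x y =
     exp (- (x\<^sup>2 - 2 * \<rho> * x * y + y\<^sup>2) / (2 * (1 - \<rho>\<^sup>2))) / (2 * pi * sqrt (1 - \<rho>\<^sup>2))"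

end

theory Submission
  imports Defs
begin

lemma quad_bound:
  fixes \<rho> x y d :: real
  assumes "0 \<le> \<rho>" "\<rho> < 1" "0 \<le> d" "d \<le> \<bar>x\<bar>" "d \<le> \<bar>y\<bar>"
  shows "d\<^sup>2 / (1 + \<rho>) \<le> (x\<^sup>2 - 2 * \<rho> * x * y + y\<^sup>2) / (2 * (1 - \<rho>\<^sup>2))"
proof -
  have e: "x\<^sup>2 - 2 * \<rho> * x * y + y\<^sup>2 = (1 - \<rho>) * (x\<^sup>2 + y\<^sup>2) + \<rho> * (x - y)\<^sup>2"
    by (simp add: power2_eq_square algebra_simps)
  have "d\<^sup>2 \<le> x\<^sup>2" "d\<^sup>2 \<le> y\<^sup>2" using assms
    by (metis abs_le_square_iff abs_of_nonneg)+
  hence h1: "(1 - \<rho>) * (2 * d\<^sup>2) \<le> (1 - \<rho>) * (x\<^sup>2 + y\<^sup>2)"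
    using assms by (intro mult_left_mono) auto
  have h2: "0 \<le> \<rho> * (x - y)\<^sup>2" using assms by simp
  have h3: "(1 - \<rho>) * (2 * d\<^sup>2) \<le> x\<^sup>2 - 2 * \<rho> * x * y + y\<^sup>2"
    unfolding e using h1 h2 by linarith
  have h4: "2 * (1 - \<rho>\<^sup>2) = (1 - \<rho>) * (2 * (1 + \<rho>))"
    by (simp add: power2_eq_square algebra_simps)
  have p: "0 < 1 - \<rho>" "0 < 1 + \<rho>" using assms by auto
  have a: "(1 - \<rho>) * (2 * d\<^sup>2) / ((1 - \<rho>) * (2 * (1 + \<rho>))) = (2 * d\<^sup>2) / (2 * (1 + \<rho>))"
    using p by (intro nonzero_mult_divide_mult_cancel_left) auto
  have b: "(2 * d\<^sup>2) / (2 * (1 + \<rho>)) = d\<^sup>2 / (1 + \<rho>)"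
    by (intro nonzero_mult_divide_mult_cancel_left) auto
  have "d\<^sup>2 / (1 + \<rho>) = ((1 - \<rho>) * (2 * d\<^sup>2)) / ((1 - \<rho>) * (2 * (1 + \<rho>)))"
    using a b by simp
  also have "\<dots> = (1 - \<rho>) * (2 * d\<^sup>2) / (2 * (1 - \<rho>\<^sup>2))"
    by (simp only: h4)
  also have "\<dots> \<le> (x\<^sup>2 - 2 * \<rho> * x * y + y\<^sup>2) / (2 * (1 - \<rho>\<^sup>2))"
    using h3 p unfolding h4 by (intro divide_right_mono) auto
  finally show ?thesis .
qed

theorem lemma2p4:
  fixes M :: "'a measure" and X Y :: "'a \<Rightarrow> real"
    and \<rho> u :: real and S :: "real set"
  assumes "prob_space M"
    and "distributed M (lborel \<Otimes>\<^sub>M lborel) (\<lambda>\<omega>. (X \<omega>, Y \<omega>))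
           (\<lambda>(x, y). ennreal (bvn_density \<rho> x y))"
    and "0 \<le> \<rho>" and "\<rho> < 1"
    and "open S" and "bounded S" and "emeasure lborel S < \<infinity>"
    and "u > 0"
  shows "measure M {\<omega> \<in> space M. X \<omega> - u \<in> S \<and> Y \<omega> - u \<in> S}
         \<le> (measure lborel S)\<^sup>2 / (2 * pi * sqrt (1 - \<rho>\<^sup>2))
            * exp (- ((INF s\<in>S. \<bar>u + s\<bar>)\<^sup>2) / (1 + \<rho>))"
proof -
  define N where "N = (lborel \<Otimes>\<^sub>M lborel :: (real \<times> real) measure)"
  define f where "f = (\<lambda>(x, y). ennreal (bvn_density \<rho> x y))"
  define XY where "XY = (\<lambda>\<omega>. (X \<omega>, Y \<omega>))"
  define d where "d = (INF s\<in>S. \<bar>u + s\<bar>)"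
  define C where "C = exp (- (d\<^sup>2) / (1 + \<rho>)) / (2 * pi * sqrt (1 - \<rho>\<^sup>2))"
  define T where "T = {x::real. x - u \<in> S}"
  define A where "A = T \<times> T"
  have D: "distributed M N XY f" using assms(2) unfolding N_def f_def XY_def .
  have sq: "0 < 1 - \<rho>\<^sup>2" using assms(3,4) by (smt (verit) power2_eq_square mult_left_le_one_le)
  have C0: "0 \<le> C" unfolding C_def using sq by simp
  have Topen: "open T" unfolding T_def
    by (rule open_vimage[OF assms(5), unfolded vimage_def]) (intro continuous_intros)
  have Tm: "T \<in> sets lborel" using Topen by simp
  have Am: "A \<in> sets N" unfolding A_def N_def using Tm by simp
  have XYm: "XY \<in> measurable M N" using distributed_measurable[OF D] .
  have fm: "f \<in> borel_measurable N" using distributed_borel_measurable[OF D] .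
  have TS: "emeasure lborel T = emeasure lborel S"
  proof -
    have "emeasure lborel S = emeasure (distr lborel borel ((+) (-u))) S"
      by (simp add: lborel_distr_plus)
    also have "\<dots> = emeasure lborel ((+) (-u) -` S \<inter> space lborel)"
      using assms(5) by (subst emeasure_distr) auto
    also have "(+) (-u) -` S \<inter> space lborel = T" unfolding T_def by auto
    finally show ?thesis by simp
  qed
  have Sfin: "emeasure lborel S = ennreal (measure lborel S)"
    using assms(7) by (simp add: emeasure_eq_ennreal_measure)
  have pt: "f z \<le> ennreal C" if "z \<in> A" for z
  proof -
    obtain x y where z: "z = (x, y)" by fastforce
    have xs: "x - u \<in> S" "y - u \<in> S" using that z unfolding A_def T_def by auto
    have bdd: "bdd_below ((\<lambda>s. \<bar>u + s\<bar>) ` S)" by (rule bdd_belowI[of _ 0]) auto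
    have "d \<le> \<bar>u + (x - u)\<bar>" unfolding d_def by (rule cINF_lower[OF bdd xs(1)])
    moreover have "d \<le> \<bar>u + (y - u)\<bar>" unfolding d_def by (rule cINF_lower[OF bdd xs(2)])
    ultimately have "d \<le> \<bar>x\<bar> \<and> d \<le> \<bar>y\<bar>" by simp
    hence dx: "d \<le> \<bar>x\<bar>" "d \<le> \<bar>y\<bar>" by blast+
    have d0: "0 \<le> d" unfolding d_def using xs by (intro cINF_greatest) auto
    have q: "d\<^sup>2 / (1 + \<rho>) \<le> (x\<^sup>2 - 2 * \<rho> * x * y + y\<^sup>2) / (2 * (1 - \<rho>\<^sup>2))"
      by (rule quad_bound[OF assms(3,4) d0 dx])
    have "bvn_density \<rho> x y \<le> C"
    proof -
      have "- (x\<^sup>2 - 2 * \<rho> * x * y + y\<^sup>2) / (2 * (1 - \<rho>\<^sup>2)) \<le> - (d\<^sup>2) / (1 + \<rho>)"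
        using q by (simp only: minus_divide_left neg_le_iff_le)
      hence "exp (- (x\<^sup>2 - 2 * \<rho> * x * y + y\<^sup>2) / (2 * (1 - \<rho>\<^sup>2))) \<le> exp (- (d\<^sup>2) / (1 + \<rho>))"
        by (simp only: exp_le_cancel_iff)
      moreover have "0 < 2 * pi * sqrt (1 - \<rho>\<^sup>2)" using sq by simp
      ultimately show ?thesis unfolding bvn_density_def C_def
        by (rule divide_right_mono[OF _ less_imp_le])
    qed
    thus ?thesis unfolding z f_def by (simp add: ennreal_leI)
  qed
  have "emeasure M {\<omega> \<in> space M. X \<omega> - u \<in> S \<and> Y \<omega> - u \<in> S} = emeasure M (XY -` A \<inter> space M)"
    unfolding XY_def A_def T_def by (intro arg_cong[where f="emeasure M"]) auto
  also have "\<dots> = emeasure (distr M N XY) A" using XYm Am by (simp add: emeasure_distr)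
  also have "\<dots> = emeasure (density N f) A" using distributed_distr_eq_density[OF D] by simp
  also have "\<dots> = (\<integral>\<^sup>+ z. f z * indicator A z \<partial>N)" using Am fm by (simp add: emeasure_density)
  also have "\<dots> \<le> (\<integral>\<^sup>+ z. ennreal C * indicator A z \<partial>N)"
    using pt by (intro nn_integral_mono) (auto simp: indicator_def)
  also have "\<dots> = ennreal C * emeasure N A" using Am by (simp add: nn_integral_cmult_indicator)
  also have "emeasure N A = emeasure lborel T * emeasure lborel T"
    unfolding N_def A_def using Tm by (simp add: lborel.emeasure_pair_measure_Times)
  also have "\<dots> = ennreal ((measure lborel S)\<^sup>2)"
    using TS Sfin by (simp add: power2_eq_square ennreal_mult)
  finally have le: "emeasure M {\<omega> \<in> space M. X \<omega> - u \<in> S \<and> Y \<omega> - u \<in> S}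
      \<le> ennreal (C * (measure lborel S)\<^sup>2)" using C0 by (simp add: ennreal_mult)
  have "measure M {\<omega> \<in> space M. X \<omega> - u \<in> S \<and> Y \<omega> - u \<in> S} \<le> C * (measure lborel S)\<^sup>2"
    using enn2real_leI[OF _ le] C0 unfolding measure_def[of M] by simp
  thus ?thesis unfolding C_def d_def by (simp add: field_simps)
qed

end
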